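(* Let $f$ be a weighted sub-insect count, $f(G)=\sum_H a_H\,\mathbf 1[H\sqsubseteq G]$. Then $f$ is additive (i.e., $f(G_1\uplus G_2)=f(G_1)+f(G_2)$ for all disjoint insects $G_1,G_2$) if and only if $a_H=0$ for every insect $H$ that is not connected.
   Context: Fix a ground set of vertices. An insect is a pair $H=(S,E)$ where $S$ is a finite nonempty set of vertices (the label set, $\underline V(H)$) and $E$ is a finite set of hyperedges (finite vertex sets) with $e\cap S\neq\emptyset$ for all $e\in E$. Its boundary is $B(H)=(\bigcup_{e\in E}e)\setminus S$ and its size is $|H|=|S|$. $H$ is connected if the hypergraph $(S,\{e\cap S:e\in E\})$ is connected. Insects $H_1=(S_1,E_1)$, $H_2=(S_2,E_2)$ are disjoint if $S_1\cap S_2=\emptyset$, $E_1\cap E_2=\emptyset$, $S_2\cap B(H_1)=\emptyset$ and $S_1\cap B(H_2)=\emptyset$; then $H_1\uplus H_2=(S_1\cup S_2,E_1\cup E_2)$. An insect is not connected exactly when it can be written as $H_1\uplus H_2$ for disjoint insects. For an insect $G=(S,E)$ and nonempty $S'\subseteq S$, the induced sub-insect is $G^+[S']=(S',\{e\in E:e\cap S'\ne\emptyset\})$; $H\sqsubseteq G$ means $H=G^+[S']$ for some such $S'$, and $\mathbf 1[H\sqsubseteq G]$ is its indicator. A weighted sub-insect count is a function on insects of the form $f(G)=\sum_H a_H\mathbf 1[H\sqsubseteq G]$, the sum over all insects $H$, with complex coefficients $a_H$ depending only on $H$ (the sum has finitely many nonzero terms for each $G$). *)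

theory Defs
  imports Complex_Main
begin

type_synonym 'v insect = "'v set \<times> 'v set set"

definition labels :: "'v insect \<Rightarrow> 'v set" where
  "labels H = fst H"

definition hedges :: "'v insect \<Rightarrow> 'v set set" where
  "hedges H = snd H"

definition is_insect :: "'v insect \<Rightarrow> bool" where
  "is_insect H \<longleftrightarrow> finite (labels H) \<and> labels H \<noteq> {} \<and> finite (hedges H)
     \<and> (\<forall>e\<in>hedges H. finite e \<and> e \<inter> labels H \<noteq> {})"

definition boundary :: "'v insect \<Rightarrow> 'v set" where
  "boundary H = (\<Union>(hedges H)) - labels H"

definition insect_adj :: "'v insect \<Rightarrow> ('v \<times> 'v) set" where
  "insect_adj H = {(x, y). \<exists>e\<in>hedges H. x \<in> e \<inter> labels H \<and> y \<in> e \<inter> labels H}"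

definition insect_connected :: "'v insect \<Rightarrow> bool" where
  "insect_connected H \<longleftrightarrow> (\<forall>x\<in>labels H. \<forall>y\<in>labels H. (x, y) \<in> (insect_adj H)\<^sup>*)"

definition insect_disjoint :: "'v insect \<Rightarrow> 'v insect \<Rightarrow> bool" where
  "insect_disjoint H1 H2 \<longleftrightarrow> labels H1 \<inter> labels H2 = {} \<and> hedges H1 \<inter> hedges H2 = {}
     \<and> labels H2 \<inter> boundary H1 = {} \<and> labels H1 \<inter> boundary H2 = {}"

definition insect_union :: "'v insect \<Rightarrow> 'v insect \<Rightarrow> 'v insect" where
  "insect_union H1 H2 = (labels H1 \<union> labels H2, hedges H1 \<union> hedges H2)"

definition induced :: "'v insect \<Rightarrow> 'v set \<Rightarrow> 'v insect" where
  "induced G S' = (S', {e \<in> hedges G. e \<inter> S' \<noteq> {}})"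

definition sub_insect :: "'v insect \<Rightarrow> 'v insect \<Rightarrow> bool" where
  "sub_insect H G \<longleftrightarrow> (\<exists>S'. S' \<noteq> {} \<and> S' \<subseteq> labels G \<and> H = induced G S')"

text \<open>Weighted sub-insect count with coefficients a: f(G) = sum of a_H over H \<sqsubseteq> G
  (only finitely many such H for an insect G).\<close>
definition wsic :: "('v insect \<Rightarrow> complex) \<Rightarrow> 'v insect \<Rightarrow> complex" where
  "wsic a G = (\<Sum>H\<in>{H. sub_insect H G}. a H)"

definition additive :: "('v insect \<Rightarrow> complex) \<Rightarrow> bool" where
  "additive f \<longleftrightarrow> (\<forall>G1 G2. is_insect G1 \<longrightarrow> is_insect G2 \<longrightarrow> insect_disjoint G1 G2 \<longrightarrow>
     f (insect_union G1 G2) = f G1 + f G2)"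

end

theory Submission
  imports Defs
begin

lemma wsic_alt:
  "wsic a G = (\<Sum>S'\<in>{S'. S' \<noteq> {} \<and> S' \<subseteq> labels G}. a (induced G S'))"
proof -
  have eq: "{H. sub_insect H G} = induced G ` {S'. S' \<noteq> {} \<and> S' \<subseteq> labels G}"
    unfolding sub_insect_def by auto
  have inj: "inj_on (induced G) {S'. S' \<noteq> {} \<and> S' \<subseteq> labels G}"
    by (rule inj_onI) (simp add: induced_def)
  show ?thesis unfolding wsic_def eq using sum.reindex[OF inj] by simp
qed

lemma induced_insect:
  assumes "is_insect G" "S' \<noteq> {}" "S' \<subseteq> labels G"
  shows "is_insect (induced G S')"
  using assms unfolding is_insect_def induced_def labels_def hedges_def
  by (auto intro: finite_subset)

lemma induced_full:
  assumes "is_insect G"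
  shows "induced G (labels G) = G"
  using assms unfolding is_insect_def induced_def labels_def hedges_def
  by (cases G) auto

context
  fixes G1 G2 :: "'v insect"
  assumes d: "insect_disjoint G1 G2"
begin

lemma left_induced:
  assumes "S' \<subseteq> labels G1"
  shows "induced (insect_union G1 G2) S' = induced G1 S'"
proof -
  have "\<And>e. e \<in> hedges G2 \<Longrightarrow> e \<inter> S' = {}"
  proof (rule ccontr)
    fix e assume e: "e \<in> hedges G2" "e \<inter> S' \<noteq> {}"
    then obtain z where z: "z \<in> e" "z \<in> S'" by auto
    with assms d have "z \<notin> labels G2" unfolding insect_disjoint_def by auto
    with e z have "z \<in> boundary G2" unfolding boundary_def by auto
    with z assms d show False unfolding insect_disjoint_def by auto
  qed
  then show ?thesis unfolding induced_def insect_union_def hedges_def by auto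
qed

lemma right_induced:
  assumes "S' \<subseteq> labels G2"
  shows "induced (insect_union G1 G2) S' = induced G2 S'"
proof -
  have "\<And>e. e \<in> hedges G1 \<Longrightarrow> e \<inter> S' = {}"
  proof (rule ccontr)
    fix e assume e: "e \<in> hedges G1" "e \<inter> S' \<noteq> {}"
    then obtain z where z: "z \<in> e" "z \<in> S'" by auto
    with assms d have "z \<notin> labels G1" unfolding insect_disjoint_def by auto
    with e z have "z \<in> boundary G1" unfolding boundary_def by auto
    with z assms d show False unfolding insect_disjoint_def by auto
  qed
  then show ?thesis unfolding induced_def insect_union_def hedges_def by (auto simp: hedges_def)
qed

lemma mixed_not_connected:
  assumes sub: "S' \<subseteq> labels G1 \<union> labels G2" and x: "x \<in> S' \<inter> labels G1"
    and y: "y \<in> S' \<inter> labels G2"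
  shows "\<not> insect_connected (induced (insect_union G1 G2) S')"
proof
  let ?H = "induced (insect_union G1 G2) S'"
  assume c: "insect_connected ?H"
  have lH: "labels ?H = S'" by (simp add: induced_def labels_def)
  have "(x, y) \<in> (insect_adj ?H)\<^sup>*" using c x y lH unfolding insect_connected_def by auto
  then have "y \<in> labels G1"
  proof (induction rule: rtrancl_induct)
    case base then show ?case using x by simp
  next
    case (step u v)
    then obtain e where e: "e \<in> hedges ?H" "u \<in> e \<inter> S'" "v \<in> e \<inter> S'"
      unfolding insect_adj_def lH by auto
    have eu: "e \<in> hedges G1 \<union> hedges G2" using e(1)
      by (simp add: induced_def hedges_def insect_union_def)
    show ?case
    proof (cases "e \<in> hedges G1")
      case True
      show ?thesis
      proof (rule ccontr)
        assume "v \<notin> labels G1"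
        then have "v \<in> labels G2" using e sub by auto
        moreover have "v \<in> boundary G1" using True e \<open>v \<notin> labels G1\<close> unfolding boundary_def by auto
        ultimately show False using d unfolding insect_disjoint_def by auto
      qed
    next
      case False
      then have e2: "e \<in> hedges G2" using eu by auto
      have "u \<notin> labels G2" using step.IH d unfolding insect_disjoint_def by auto
      then have "u \<in> boundary G2" using e2 e unfolding boundary_def by auto
      then show ?thesis using step.IH d unfolding insect_disjoint_def by auto
    qed
  qed
  then show False using y d unfolding insect_disjoint_def by auto
qed

lemma wsic_split:
  assumes f1: "finite (labels G1)" and f2: "finite (labels G2)"
  shows "wsic a (insect_union G1 G2) = wsic a G1 + wsic a G2
     + (\<Sum>S'\<in>{S'. S' \<subseteq> labels G1 \<union> labels G2 \<and> S' \<inter> labels G1 \<noteq> {} \<and> S' \<inter> labels G2 \<noteq> {}}.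
          a (induced (insect_union G1 G2) S'))"
proof -
  let ?G = "insect_union G1 G2"
  let ?A = "{S'. S' \<noteq> {} \<and> S' \<subseteq> labels G1}"
  let ?B = "{S'. S' \<noteq> {} \<and> S' \<subseteq> labels G2}"
  let ?T = "{S'. S' \<subseteq> labels G1 \<union> labels G2 \<and> S' \<inter> labels G1 \<noteq> {} \<and> S' \<inter> labels G2 \<noteq> {}}"
  have dis: "labels G1 \<inter> labels G2 = {}" using d unfolding insect_disjoint_def by auto
  have lG: "labels ?G = labels G1 \<union> labels G2" by (simp add: insect_union_def labels_def)
  have U: "{S'. S' \<noteq> {} \<and> S' \<subseteq> labels ?G} = (?A \<union> ?B) \<union> ?T" unfolding lG using dis by blast
  have fin: "finite (Pow (labels G1 \<union> labels G2))" using f1 f2 by simp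
  have fA: "finite ?A" by (rule finite_subset[OF _ fin]) auto
  have fB: "finite ?B" by (rule finite_subset[OF _ fin]) auto
  have fT: "finite ?T" by (rule finite_subset[OF _ fin]) auto
  have s1: "(\<Sum>S'\<in>?A. a (induced ?G S')) = wsic a G1"
    unfolding wsic_alt by (rule sum.cong) (auto simp: left_induced)
  have s2: "(\<Sum>S'\<in>?B. a (induced ?G S')) = wsic a G2"
    unfolding wsic_alt by (rule sum.cong) (auto simp: right_induced)
  have "wsic a ?G = (\<Sum>S'\<in>(?A \<union> ?B) \<union> ?T. a (induced ?G S'))"
    unfolding wsic_alt U ..
  also have "\<dots> = (\<Sum>S'\<in>?A \<union> ?B. a (induced ?G S')) + (\<Sum>S'\<in>?T. a (induced ?G S'))"
    by (rule sum.union_disjoint) (use fA fB fT dis in auto)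
  also have "(\<Sum>S'\<in>?A \<union> ?B. a (induced ?G S')) = (\<Sum>S'\<in>?A. a (induced ?G S')) + (\<Sum>S'\<in>?B. a (induced ?G S'))"
    by (rule sum.union_disjoint) (use fA fB dis in auto)
  finally show ?thesis using s1 s2 by simp
qed

end

lemma decompose:
  assumes H: "is_insect H" and nc: "\<not> insect_connected H"
  shows "\<exists>G1 G2. is_insect G1 \<and> is_insect G2 \<and> insect_disjoint G1 G2 \<and> H = insect_union G1 G2"
proof -
  obtain x y where xy: "x \<in> labels H" "y \<in> labels H" "(x, y) \<notin> (insect_adj H)\<^sup>*"
    using nc unfolding insect_connected_def by auto
  define S1 where "S1 = {z \<in> labels H. (x, z) \<in> (insect_adj H)\<^sup>*}"
  define S2 where "S2 = labels H - S1"
  have x1: "x \<in> S1" using xy unfolding S1_def by auto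
  have y2: "y \<in> S2" using xy unfolding S1_def S2_def by auto
  have nb: "\<And>e. e \<in> hedges H \<Longrightarrow> e \<inter> S1 = {} \<or> e \<inter> S2 = {}"
  proof (rule ccontr)
    fix e assume e: "e \<in> hedges H" "\<not> (e \<inter> S1 = {} \<or> e \<inter> S2 = {})"
    then obtain z1 z2 where z: "z1 \<in> e \<inter> S1" "z2 \<in> e \<inter> S2" by auto
    have "(z1, z2) \<in> insect_adj H" using e z unfolding insect_adj_def S2_def S1_def by auto
    moreover have "(x, z1) \<in> (insect_adj H)\<^sup>*" using z unfolding S1_def by auto
    ultimately have "(x, z2) \<in> (insect_adj H)\<^sup>*" by auto
    then show False using z unfolding S1_def S2_def by auto
  qed
  define G1 where "G1 = induced H S1"
  define G2 where "G2 = induced H S2"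
  have sub1: "S1 \<subseteq> labels H" and sub2: "S2 \<subseteq> labels H" unfolding S1_def S2_def by auto
  have i1: "is_insect G1" unfolding G1_def by (rule induced_insect[OF H]) (use x1 sub1 in auto)
  have i2: "is_insect G2" unfolding G2_def by (rule induced_insect[OF H]) (use y2 sub2 in auto)
  have meet: "\<And>e. e \<in> hedges H \<Longrightarrow> e \<inter> labels H \<noteq> {}" using H unfolding is_insect_def by auto
  have lab: "labels H = S1 \<union> S2" unfolding S2_def using sub1 by auto
  have dj: "insect_disjoint G1 G2"
    unfolding insect_disjoint_def G1_def G2_def induced_def labels_def hedges_def boundary_def
    using nb unfolding hedges_def S2_def by auto
  have "insect_union G1 G2 = (S1 \<union> S2, {e \<in> hedges H. e \<inter> S1 \<noteq> {}} \<union> {e \<in> hedges H. e \<inter> S2 \<noteq> {}})"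
    unfolding insect_union_def G1_def G2_def induced_def labels_def hedges_def by simp
  also have "\<dots> = (labels H, hedges H)" using meet lab by auto
  also have "\<dots> = H" unfolding labels_def hedges_def by simp
  finally show ?thesis using i1 i2 dj by metis
qed

theorem lemma3p2:
  fixes a :: "'v insect \<Rightarrow> complex"
  shows "additive (wsic a) \<longleftrightarrow> (\<forall>H. is_insect H \<and> \<not> insect_connected H \<longrightarrow> a H = 0)"
proof
  assume add: "additive (wsic a)"
  have "\<And>n H. card (labels H) = n \<Longrightarrow> is_insect H \<Longrightarrow> \<not> insect_connected H \<Longrightarrow> a H = 0"
  proof -
    fix n
    show "\<And>H. card (labels H) = n \<Longrightarrow> is_insect H \<Longrightarrow> \<not> insect_connected H \<Longrightarrow> a H = 0"
    proof (induction n rule: less_induct)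
      case (less n H)
      obtain G1 G2 where G: "is_insect G1" "is_insect G2" "insect_disjoint G1 G2" "H = insect_union G1 G2"
        using decompose[OF less.prems(2,3)] by blast
      let ?T = "{S'. S' \<subseteq> labels G1 \<union> labels G2 \<and> S' \<inter> labels G1 \<noteq> {} \<and> S' \<inter> labels G2 \<noteq> {}}"
      have f1: "finite (labels G1)" "finite (labels G2)" using G unfolding is_insect_def by auto
      have "wsic a H = wsic a G1 + wsic a G2"
        using add G unfolding additive_def by blast
      with wsic_split[OF G(3) f1, of a] G(4)
      have s0: "(\<Sum>S'\<in>?T. a (induced H S')) = 0" by simp
      have lH: "labels H = labels G1 \<union> labels G2" using G(4) by (simp add: insect_union_def labels_def)
      have ne1: "labels G1 \<noteq> {}" "labels G2 \<noteq> {}" using G unfolding is_insect_def by auto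
      have inT: "labels H \<in> ?T" using lH ne1 by auto
      have fT: "finite ?T" by (rule finite_subset[of _ "Pow (labels G1 \<union> labels G2)"]) (use f1 in auto)
      have z: "\<forall>S'\<in>?T - {labels H}. a (induced H S') = 0"
      proof
        fix S' assume S': "S' \<in> ?T - {labels H}"
        have ps: "S' \<subset> labels H" using S' lH by auto
        have fH: "finite (labels H)" using lH f1 by simp
        have "card S' < n" using psubset_card_mono[OF fH ps] less.prems(1) by simp
        moreover have "card (labels (induced H S')) = card S'" by (simp add: induced_def labels_def)
        moreover have "is_insect (induced H S')"
          by (rule induced_insect[OF less.prems(2)]) (use S' lH in auto)
        moreover have "\<not> insect_connected (induced H S')"
          using mixed_not_connected[OF G(3), of S'] S' G(4) by auto
        ultimately show "a (induced H S') = 0" using less.IH by blast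
      qed
      have "(\<Sum>S'\<in>?T. a (induced H S')) = (\<Sum>S'\<in>{labels H}. a (induced H S'))"
        by (rule sum.mono_neutral_right[OF fT _ z]) (use inT in blast)
      then have "(\<Sum>S'\<in>?T. a (induced H S')) = a (induced H (labels H))" by simp
      with s0 induced_full[OF less.prems(2)] show ?case by simp
    qed
  qed
  then show "\<forall>H. is_insect H \<and> \<not> insect_connected H \<longrightarrow> a H = 0" by blast
next
  assume z: "\<forall>H. is_insect H \<and> \<not> insect_connected H \<longrightarrow> a H = 0"
  show "additive (wsic a)"
    unfolding additive_def
  proof (intro allI impI)
    fix G1 G2 :: "'v insect"
    assume G: "is_insect G1" "is_insect G2" "insect_disjoint G1 G2"
    have f1: "finite (labels G1)" "finite (labels G2)" using G unfolding is_insect_def by auto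
    have iU: "is_insect (insect_union G1 G2)"
      using G unfolding is_insect_def insect_union_def labels_def hedges_def by auto
    have "(\<Sum>S'\<in>{S'. S' \<subseteq> labels G1 \<union> labels G2 \<and> S' \<inter> labels G1 \<noteq> {} \<and> S' \<inter> labels G2 \<noteq> {}}.
          a (induced (insect_union G1 G2) S')) = 0"
    proof (rule sum.neutral, rule ballI)
      fix S' assume S': "S' \<in> {S'. S' \<subseteq> labels G1 \<union> labels G2 \<and> S' \<inter> labels G1 \<noteq> {} \<and> S' \<inter> labels G2 \<noteq> {}}"
      have "is_insect (induced (insect_union G1 G2) S')"
        by (rule induced_insect[OF iU]) (use S' in \<open>auto simp: insect_union_def labels_def\<close>)
      moreover have "\<not> insect_connected (induced (insect_union G1 G2) S')"
        using mixed_not_connected[OF G(3), of S'] S' by auto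
      ultimately show "a (induced (insect_union G1 G2) S') = 0" using z by blast
    qed
    then show "wsic a (insect_union G1 G2) = wsic a G1 + wsic a G2"
      using wsic_split[OF G(3) f1, of a] by simp
  qed
qed

end
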